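(* Every pre-Hilbert $*$-category is additive, i.e. it has finite biproducts and its unique enrichment in commutative monoids (coming from the biproducts) is an enrichment in abelian groups.
   Context: A $*$-category is a category equipped with a choice of morphism $f^*\colon Y\to X$ for each morphism $f\colon X\to Y$ such that $1^*=1$, $(gf)^*=f^*g^*$ and $(f^* )^*=f$. A morphism $f$ is an isometry (isometric) if $f^*f=1$. A kernel of $f\colon X\to Y$ is an equaliser of $f$ and the zero morphism; an isometric kernel is a kernel that is an isometry. An orthonormal biproduct of $X_1,X_2$ is a biproduct $(X,s_1,r_1,s_2,r_2)$ (so $(X,s_1,s_2)$ a coproduct, $(X,r_1,r_2)$ a product, $r_ks_k=1$, $r_ks_j=0$ for $j\neq k$) with $r_k=s_k^*$ for each $k$. A pre-Hilbert $*$-category is a $*$-category in which (R1) there is a zero object, (R2) every pair of objects has an orthonormal biproduct, (R3) every morphism has an isometric kernel, and (R4) for every object $X$ the diagonal $\Delta=\begin{bmatrix}1\\1\end{bmatrix}\colon X\to X\oplus X$ (into a chosen orthonormal biproduct) is a normal monomorphism, i.e. a kernel of some morphism. A category with finite biproducts has a unique enrichment in commutative monoids, with $f+g=\nabla(f\oplus g)\Delta$. *)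

theory Defs
  imports "HOL-Algebra.Group"
begin

text \<open>A category presented by its objects, arrows, source, target, identities and
  composition (Cmp C g f is g after f), together with an involution Str (the star).\<close>

record ('o, 'm) starcat =
  Ob  :: "'o set"
  Ar  :: "'m set"
  Src :: "'m \<Rightarrow> 'o"
  Tgt :: "'m \<Rightarrow> 'o"
  Idm :: "'o \<Rightarrow> 'm"
  Cmp :: "'m \<Rightarrow> 'm \<Rightarrow> 'm"
  Str :: "'m \<Rightarrow> 'm"

definition hom :: "('o, 'm) starcat \<Rightarrow> 'o \<Rightarrow> 'o \<Rightarrow> 'm set" where
  "hom C X Y = {f \<in> Ar C. Src C f = X \<and> Tgt C f = Y}"

definition is_category :: "('o, 'm) starcat \<Rightarrow> bool" where
  "is_category C \<longleftrightarrow>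
     (\<forall>f \<in> Ar C. Src C f \<in> Ob C \<and> Tgt C f \<in> Ob C)
   \<and> (\<forall>X \<in> Ob C. Idm C X \<in> hom C X X)
   \<and> (\<forall>f \<in> Ar C. \<forall>g \<in> Ar C. Tgt C f = Src C g \<longrightarrow>
        Cmp C g f \<in> hom C (Src C f) (Tgt C g))
   \<and> (\<forall>f \<in> Ar C. \<forall>g \<in> Ar C. \<forall>h \<in> Ar C. Tgt C f = Src C g \<longrightarrow> Tgt C g = Src C h \<longrightarrow>
        Cmp C h (Cmp C g f) = Cmp C (Cmp C h g) f)
   \<and> (\<forall>f \<in> Ar C. Cmp C (Idm C (Tgt C f)) f = f \<and> Cmp C f (Idm C (Src C f)) = f)"

definition is_star_category :: "('o, 'm) starcat \<Rightarrow> bool" where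
  "is_star_category C \<longleftrightarrow> is_category C
   \<and> (\<forall>f \<in> Ar C. Str C f \<in> hom C (Tgt C f) (Src C f))
   \<and> (\<forall>X \<in> Ob C. Str C (Idm C X) = Idm C X)
   \<and> (\<forall>f \<in> Ar C. \<forall>g \<in> Ar C. Tgt C f = Src C g \<longrightarrow>
        Str C (Cmp C g f) = Cmp C (Str C f) (Str C g))
   \<and> (\<forall>f \<in> Ar C. Str C (Str C f) = f)"

definition is_zero_obj :: "('o, 'm) starcat \<Rightarrow> 'o \<Rightarrow> bool" where
  "is_zero_obj C Z \<longleftrightarrow> Z \<in> Ob C \<and>
     (\<forall>Y \<in> Ob C. (\<exists>!f. f \<in> hom C Z Y) \<and> (\<exists>!f. f \<in> hom C Y Z))"

definition zero_mor :: "('o, 'm) starcat \<Rightarrow> 'o \<Rightarrow> 'o \<Rightarrow> 'm" where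
  "zero_mor C X Y = (SOME z. \<exists>Z. is_zero_obj C Z \<and>
       z = Cmp C (THE b. b \<in> hom C Z Y) (THE a. a \<in> hom C X Z))"

definition is_equaliser :: "('o, 'm) starcat \<Rightarrow> 'm \<Rightarrow> 'm \<Rightarrow> 'm \<Rightarrow> bool" where
  "is_equaliser C f g e \<longleftrightarrow> e \<in> Ar C \<and> Tgt C e = Src C f \<and>
     Cmp C f e = Cmp C g e \<and>
     (\<forall>h \<in> Ar C. Tgt C h = Src C f \<longrightarrow> Cmp C f h = Cmp C g h \<longrightarrow>
        (\<exists>!u. u \<in> hom C (Src C h) (Src C e) \<and> Cmp C e u = h))"

definition is_kernel :: "('o, 'm) starcat \<Rightarrow> 'm \<Rightarrow> 'm \<Rightarrow> bool" where
  "is_kernel C f e \<longleftrightarrow> is_equaliser C f (zero_mor C (Src C f) (Tgt C f)) e"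

definition is_isometry :: "('o, 'm) starcat \<Rightarrow> 'm \<Rightarrow> bool" where
  "is_isometry C f \<longleftrightarrow> f \<in> Ar C \<and> Cmp C (Str C f) f = Idm C (Src C f)"

definition is_normal_mono :: "('o, 'm) starcat \<Rightarrow> 'm \<Rightarrow> bool" where
  "is_normal_mono C e \<longleftrightarrow> (\<exists>g \<in> Ar C. Src C g = Tgt C e \<and> is_kernel C g e)"

definition is_biproduct :: "('o, 'm) starcat \<Rightarrow> 'o \<Rightarrow> 'o \<Rightarrow> 'o \<times> 'm \<times> 'm \<times> 'm \<times> 'm \<Rightarrow> bool" where
  "is_biproduct C X1 X2 b \<longleftrightarrow> (case b of (X, s1, r1, s2, r2) \<Rightarrow>
     X \<in> Ob C \<and> s1 \<in> hom C X1 X \<and> s2 \<in> hom C X2 X \<and> r1 \<in> hom C X X1 \<and> r2 \<in> hom C X X2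
   \<and> (\<forall>W \<in> Ob C. \<forall>a1 \<in> hom C X1 W. \<forall>a2 \<in> hom C X2 W.
        \<exists>!u. u \<in> hom C X W \<and> Cmp C u s1 = a1 \<and> Cmp C u s2 = a2)
   \<and> (\<forall>W \<in> Ob C. \<forall>a1 \<in> hom C W X1. \<forall>a2 \<in> hom C W X2.
        \<exists>!u. u \<in> hom C W X \<and> Cmp C r1 u = a1 \<and> Cmp C r2 u = a2)
   \<and> Cmp C r1 s1 = Idm C X1 \<and> Cmp C r2 s2 = Idm C X2
   \<and> Cmp C r1 s2 = zero_mor C X2 X1 \<and> Cmp C r2 s1 = zero_mor C X1 X2)"

definition is_orthonormal_biproduct ::
  "('o, 'm) starcat \<Rightarrow> 'o \<Rightarrow> 'o \<Rightarrow> 'o \<times> 'm \<times> 'm \<times> 'm \<times> 'm \<Rightarrow> bool" where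
  "is_orthonormal_biproduct C X1 X2 b \<longleftrightarrow> is_biproduct C X1 X2 b \<and>
     (case b of (X, s1, r1, s2, r2) \<Rightarrow> r1 = Str C s1 \<and> r2 = Str C s2)"

definition diag :: "('o, 'm) starcat \<Rightarrow> 'o \<Rightarrow> 'o \<times> 'm \<times> 'm \<times> 'm \<times> 'm \<Rightarrow> 'm" where
  "diag C X b = (case b of (B, s1, r1, s2, r2) \<Rightarrow>
     THE u. u \<in> hom C X B \<and> Cmp C r1 u = Idm C X \<and> Cmp C r2 u = Idm C X)"

definition codiag :: "('o, 'm) starcat \<Rightarrow> 'o \<Rightarrow> 'o \<times> 'm \<times> 'm \<times> 'm \<times> 'm \<Rightarrow> 'm" where
  "codiag C X b = (case b of (B, s1, r1, s2, r2) \<Rightarrow>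
     THE u. u \<in> hom C B X \<and> Cmp C u s1 = Idm C X \<and> Cmp C u s2 = Idm C X)"

definition dsum :: "('o, 'm) starcat \<Rightarrow> 'o \<times> 'm \<times> 'm \<times> 'm \<times> 'm \<Rightarrow> 'o \<times> 'm \<times> 'm \<times> 'm \<times> 'm
    \<Rightarrow> 'm \<Rightarrow> 'm \<Rightarrow> 'm" where
  "dsum C b c f g = (case b of (B, s1, r1, s2, r2) \<Rightarrow> case c of (B', t1, q1, t2, q2) \<Rightarrow>
     THE v. v \<in> hom C B B' \<and> Cmp C q1 v = Cmp C f r1 \<and> Cmp C q2 v = Cmp C g r2)"

text \<open>The addition coming from biproducts: f + g = \<nabla> (f \<oplus> g) \<Delta>, using some chosen
  biproducts X \<oplus> X and Y \<oplus> Y (the result does not depend on the choice).\<close>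
definition mplus :: "('o, 'm) starcat \<Rightarrow> 'm \<Rightarrow> 'm \<Rightarrow> 'm" where
  "mplus C f g = (let X = Src C f; Y = Tgt C f;
       b = (SOME b. is_biproduct C X X b); c = (SOME c. is_biproduct C Y Y c)
     in Cmp C (codiag C Y c) (Cmp C (dsum C b c f g) (diag C X b)))"

definition is_pre_hilbert_star_category :: "('o, 'm) starcat \<Rightarrow> bool" where
  "is_pre_hilbert_star_category C \<longleftrightarrow> is_star_category C
   \<and> (\<exists>Z. is_zero_obj C Z)
   \<and> (\<forall>X1 \<in> Ob C. \<forall>X2 \<in> Ob C. \<exists>b. is_orthonormal_biproduct C X1 X2 b)
   \<and> (\<forall>f \<in> Ar C. \<exists>e. is_kernel C f e \<and> is_isometry C e)
   \<and> (\<forall>X \<in> Ob C. \<exists>b. is_orthonormal_biproduct C X X b \<and> is_normal_mono C (diag C X b))"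

text \<open>Has finite biproducts: a zero object (empty biproduct) and all binary biproducts.\<close>
definition has_finite_biproducts :: "('o, 'm) starcat \<Rightarrow> bool" where
  "has_finite_biproducts C \<longleftrightarrow> (\<exists>Z. is_zero_obj C Z)
   \<and> (\<forall>X1 \<in> Ob C. \<forall>X2 \<in> Ob C. \<exists>b. is_biproduct C X1 X2 b)"

definition hom_monoid :: "('o, 'm) starcat \<Rightarrow> 'o \<Rightarrow> 'o \<Rightarrow> 'm monoid" where
  "hom_monoid C X Y = \<lparr>carrier = hom C X Y, mult = mplus C, one = zero_mor C X Y\<rparr>"

definition is_additive :: "('o, 'm) starcat \<Rightarrow> bool" where
  "is_additive C \<longleftrightarrow> has_finite_biproducts C
   \<and> (\<forall>X \<in> Ob C. \<forall>Y \<in> Ob C. comm_group (hom_monoid C X Y))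
   \<and> (\<forall>X \<in> Ob C. \<forall>Y \<in> Ob C. \<forall>W \<in> Ob C. \<forall>f \<in> hom C X Y. \<forall>g \<in> hom C X Y.
        (\<forall>h \<in> hom C Y W. Cmp C h (mplus C f g) = mplus C (Cmp C h f) (Cmp C h g))
      \<and> (\<forall>k \<in> hom C W X. Cmp C (mplus C f g) k = mplus C (Cmp C f k) (Cmp C g k)))"

end

theory Submission
  imports Defs
begin

locale phc =
  fixes C :: "('o,'m) starcat"
  assumes phc: "is_pre_hilbert_star_category C"
begin

abbreviation cmp (infixr "\<cdot>" 70) where "g \<cdot> f \<equiv> Cmp C g f"
abbreviation st where "st f \<equiv> Str C f"
abbreviation H where "H \<equiv> Defs.hom C"
abbreviation I where "I \<equiv> Idm C"
abbreviation z where "z \<equiv> zero_mor C"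

lemma cat: "is_category C" and star: "is_star_category C"
  using phc unfolding is_pre_hilbert_star_category_def is_star_category_def by auto

lemma homD: "f \<in> H X Y \<Longrightarrow> f \<in> Ar C \<and> Src C f = X \<and> Tgt C f = Y"
  by (simp add: hom_def)

lemma ar_hom: "f \<in> Ar C \<Longrightarrow> f \<in> H (Src C f) (Tgt C f)"
  by (simp add: hom_def)

lemma hom_ob: "f \<in> H X Y \<Longrightarrow> X \<in> Ob C \<and> Y \<in> Ob C"
  using cat unfolding is_category_def hom_def by auto

lemma comp_hom[intro]: "f \<in> H X Y \<Longrightarrow> g \<in> H Y Z \<Longrightarrow> g \<cdot> f \<in> H X Z"
  using cat unfolding is_category_def hom_def by auto

lemma assoc: "f \<in> H X Y \<Longrightarrow> g \<in> H Y Z \<Longrightarrow> h \<in> H Z W \<Longrightarrow> (h \<cdot> g) \<cdot> f = h \<cdot> (g \<cdot> f)"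
proof -
  assume f: "f \<in> H X Y" and g: "g \<in> H Y Z" and h: "h \<in> H Z W"
  have "\<forall>f \<in> Ar C. \<forall>g \<in> Ar C. \<forall>h \<in> Ar C. Tgt C f = Src C g \<longrightarrow> Tgt C g = Src C h \<longrightarrow>
        Cmp C h (Cmp C g f) = Cmp C (Cmp C h g) f" using cat unfolding is_category_def by blast
  then show ?thesis using f g h unfolding hom_def by force
qed

lemma id_hom[intro]: "X \<in> Ob C \<Longrightarrow> I X \<in> H X X"
  using cat unfolding is_category_def by auto

lemma id_l[simp]: "f \<in> H X Y \<Longrightarrow> I Y \<cdot> f = f"
  using cat unfolding is_category_def hom_def by auto

lemma id_r[simp]: "f \<in> H X Y \<Longrightarrow> f \<cdot> I X = f"
  using cat unfolding is_category_def hom_def by auto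

lemma st_hom[intro]: "f \<in> H X Y \<Longrightarrow> st f \<in> H Y X"
  using star unfolding is_star_category_def hom_def by auto

lemma st_comp: "f \<in> H X Y \<Longrightarrow> g \<in> H Y Z \<Longrightarrow> st (g \<cdot> f) = st f \<cdot> st g"
  using star unfolding is_star_category_def hom_def by auto

lemma st_st[simp]: "f \<in> H X Y \<Longrightarrow> st (st f) = f"
  using star unfolding is_star_category_def hom_def by auto

lemma st_id[simp]: "X \<in> Ob C \<Longrightarrow> st (I X) = I X"
  using star unfolding is_star_category_def by auto

lemma zero_prop: "is_zero_obj C Z \<Longrightarrow> X \<in> Ob C \<Longrightarrow> (\<exists>!f. f \<in> H Z X) \<and> (\<exists>!f. f \<in> H X Z)"
proof -
  assume Z: "is_zero_obj C Z" and X: "X \<in> Ob C"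
  from Z have "\<forall>Y\<in>Ob C. (\<exists>!f. f \<in> H Z Y) \<and> (\<exists>!f. f \<in> H Y Z)" unfolding is_zero_obj_def by (rule conjunct2)
  from bspec[OF this X] show ?thesis .
qed

lemma ex1_eq: "\<exists>!x. P x \<Longrightarrow> P a \<Longrightarrow> P b \<Longrightarrow> a = b"
  by blast

lemma zero_unique: "is_zero_obj C Z \<Longrightarrow> a \<in> H X Z \<Longrightarrow> a' \<in> H X Z \<Longrightarrow> a = a'"
proof -
  assume Z: "is_zero_obj C Z" and a: "a \<in> H X Z" and a': "a' \<in> H X Z"
  have "X \<in> Ob C" using hom_ob[OF a] by blast
  from conjunct2[OF zero_prop[OF Z this]] show ?thesis using a a' by (rule ex1_eq)
qed

lemma zero_unique2: "is_zero_obj C Z \<Longrightarrow> a \<in> H Z X \<Longrightarrow> a' \<in> H Z X \<Longrightarrow> a = a'"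
proof -
  assume Z: "is_zero_obj C Z" and a: "a \<in> H Z X" and a': "a' \<in> H Z X"
  have "X \<in> Ob C" using hom_ob[OF a] by blast
  from conjunct1[OF zero_prop[OF Z this]] show ?thesis using a a' by (rule ex1_eq)
qed

lemma zero_ex: "is_zero_obj C Z \<Longrightarrow> X \<in> Ob C \<Longrightarrow> \<exists>a. a \<in> H X Z"
  using zero_prop by (meson ex1_implies_ex)

lemma zero_ex2: "is_zero_obj C Z \<Longrightarrow> X \<in> Ob C \<Longrightarrow> \<exists>a. a \<in> H Z X"
  using zero_prop by (meson ex1_implies_ex)

lemma has_zero: "\<exists>Z. is_zero_obj C Z"
  using phc unfolding is_pre_hilbert_star_category_def by auto

lemma zero_ob: "is_zero_obj C Z \<Longrightarrow> Z \<in> Ob C"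
  unfolding is_zero_obj_def by auto

lemma zero_char:
  assumes Z: "is_zero_obj C Z" and a: "a \<in> H X Z" and b: "b \<in> H Z Y"
  shows "z X Y = b \<cdot> a"
proof -
  have X: "X \<in> Ob C" and Y: "Y \<in> Ob C" using a b hom_ob by auto
  let ?P = "\<lambda>w. \<exists>Z. is_zero_obj C Z \<and> w = (THE b. b \<in> H Z Y) \<cdot> (THE a. a \<in> H X Z)"
  have ex: "\<exists>w. ?P w" using Z by blast
  have "?P (z X Y)" unfolding zero_mor_def using someI_ex[OF ex] .
  then obtain Z' where Z': "is_zero_obj C Z'" and
    w: "z X Y = (THE b. b \<in> H Z' Y) \<cdot> (THE a. a \<in> H X Z')" by blast
  obtain a' where a': "a' \<in> H X Z'" using zero_ex[OF Z' X] by blast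
  obtain b' where b': "b' \<in> H Z' Y" using zero_ex2[OF Z' Y] by blast
  have ta: "(THE a. a \<in> H X Z') = a'" using a' zero_unique[OF Z'] by blast
  have tb: "(THE b. b \<in> H Z' Y) = b'" using b' zero_unique2[OF Z'] by blast
  obtain t where t: "t \<in> H Z' Z" using zero_ex2[OF Z zero_ob[OF Z']] by blast
  have "a = t \<cdot> a'" using zero_unique[OF Z a] comp_hom[OF a' t] by blast
  moreover have "b' = b \<cdot> t" using zero_unique2[OF Z' b'] comp_hom[OF t b] by blast
  ultimately show ?thesis using w ta tb assoc[OF a' t b] by simp
qed

lemma zero_hom[intro]: "X \<in> Ob C \<Longrightarrow> Y \<in> Ob C \<Longrightarrow> z X Y \<in> H X Y"
proof -
  assume X: "X \<in> Ob C" and Y: "Y \<in> Ob C"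
  obtain Z where Z: "is_zero_obj C Z" using has_zero by blast
  obtain a where a: "a \<in> H X Z" using zero_ex[OF Z X] by blast
  obtain b where b: "b \<in> H Z Y" using zero_ex2[OF Z Y] by blast
  show ?thesis using zero_char[OF Z a b] comp_hom[OF a b] by simp
qed

lemma zero_l: "f \<in> H X Y \<Longrightarrow> W \<in> Ob C \<Longrightarrow> z Y W \<cdot> f = z X W"
proof -
  assume f: "f \<in> H X Y" and W: "W \<in> Ob C"
  obtain Z where Z: "is_zero_obj C Z" using has_zero by blast
  obtain a where a: "a \<in> H Y Z" using zero_ex[OF Z] f hom_ob by blast
  obtain b where b: "b \<in> H Z W" using zero_ex2[OF Z W] by blast
  show ?thesis using zero_char[OF Z a b] zero_char[OF Z comp_hom[OF f a] b] assoc[OF f a b] by simp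
qed

lemma zero_r: "f \<in> H X Y \<Longrightarrow> W \<in> Ob C \<Longrightarrow> f \<cdot> z W X = z W Y"
proof -
  assume f: "f \<in> H X Y" and W: "W \<in> Ob C"
  obtain Z where Z: "is_zero_obj C Z" using has_zero by blast
  obtain a where a: "a \<in> H W Z" using zero_ex[OF Z W] by blast
  obtain b where b: "b \<in> H Z X" using zero_ex2[OF Z] f hom_ob by blast
  show ?thesis using zero_char[OF Z a b] zero_char[OF Z a comp_hom[OF b f]] assoc[OF a b f] by simp
qed

lemma zero_st: "X \<in> Ob C \<Longrightarrow> Y \<in> Ob C \<Longrightarrow> st (z X Y) = z Y X"
proof -
  assume X: "X \<in> Ob C" and Y: "Y \<in> Ob C"
  obtain Z where Z: "is_zero_obj C Z" using has_zero by blast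
  obtain a where a: "a \<in> H X Z" using zero_ex[OF Z X] by blast
  obtain b where b: "b \<in> H Z Y" using zero_ex2[OF Z Y] by blast
  show ?thesis using zero_char[OF Z a b] zero_char[OF Z st_hom[OF b] st_hom[OF a]] st_comp[OF a b] by simp
qed


lemma ar_src[simp]: "f \<in> Ar C \<Longrightarrow> Src C f \<in> Ob C"
  using cat unfolding is_category_def by auto
lemma ar_tgt[simp]: "f \<in> Ar C \<Longrightarrow> Tgt C f \<in> Ob C"
  using cat unfolding is_category_def by auto
lemma comp_all: "f \<in> Ar C \<Longrightarrow> g \<in> Ar C \<Longrightarrow> Tgt C f = Src C g \<Longrightarrow> g \<cdot> f \<in> Ar C \<and> Src C (g \<cdot> f) = Src C f \<and> Tgt C (g \<cdot> f) = Tgt C g"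
  using comp_hom[of f "Src C f" "Tgt C f" g "Tgt C g"] unfolding hom_def by auto
lemma comp_ar[simp]: "f \<in> Ar C \<Longrightarrow> g \<in> Ar C \<Longrightarrow> Tgt C f = Src C g \<Longrightarrow> g \<cdot> f \<in> Ar C"
  using comp_all by blast
lemma src_comp[simp]: "f \<in> Ar C \<Longrightarrow> g \<in> Ar C \<Longrightarrow> Tgt C f = Src C g \<Longrightarrow> Src C (g \<cdot> f) = Src C f"
  using comp_all by blast
lemma tgt_comp[simp]: "f \<in> Ar C \<Longrightarrow> g \<in> Ar C \<Longrightarrow> Tgt C f = Src C g \<Longrightarrow> Tgt C (g \<cdot> f) = Tgt C g"
  using comp_all by blast
lemma as: "f \<in> Ar C \<Longrightarrow> g \<in> Ar C \<Longrightarrow> h \<in> Ar C \<Longrightarrow> Tgt C f = Src C g \<Longrightarrow> Tgt C g = Src C h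
   \<Longrightarrow> (h \<cdot> g) \<cdot> f = h \<cdot> (g \<cdot> f)"
  using assoc[of f "Src C f" "Tgt C f" g "Tgt C g" h "Tgt C h"] unfolding hom_def by auto
lemma id_ar[simp]: "X \<in> Ob C \<Longrightarrow> I X \<in> Ar C" "X \<in> Ob C \<Longrightarrow> Src C (I X) = X" "X \<in> Ob C \<Longrightarrow> Tgt C (I X) = X"
  using id_hom homD by blast+
lemma idl[simp]: "f \<in> Ar C \<Longrightarrow> Tgt C f = Y \<Longrightarrow> I Y \<cdot> f = f"
  using id_l ar_hom by metis
lemma idr[simp]: "f \<in> Ar C \<Longrightarrow> Src C f = X \<Longrightarrow> f \<cdot> I X = f"
  using id_r ar_hom by metis
lemma z_ar[simp]: "X \<in> Ob C \<Longrightarrow> Y \<in> Ob C \<Longrightarrow> z X Y \<in> Ar C"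
  "X \<in> Ob C \<Longrightarrow> Y \<in> Ob C \<Longrightarrow> Src C (z X Y) = X" "X \<in> Ob C \<Longrightarrow> Y \<in> Ob C \<Longrightarrow> Tgt C (z X Y) = Y"
  using zero_hom homD by blast+
lemma zl[simp]: "f \<in> Ar C \<Longrightarrow> Tgt C f = Y \<Longrightarrow> W \<in> Ob C \<Longrightarrow> z Y W \<cdot> f = z (Src C f) W"
  using zero_l ar_hom by metis
lemma zr[simp]: "f \<in> Ar C \<Longrightarrow> Src C f = X \<Longrightarrow> W \<in> Ob C \<Longrightarrow> f \<cdot> z W X = z W (Tgt C f)"
  using zero_r ar_hom by metis
lemma st_ar[simp]: "f \<in> Ar C \<Longrightarrow> st f \<in> Ar C" "f \<in> Ar C \<Longrightarrow> Src C (st f) = Tgt C f"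
  "f \<in> Ar C \<Longrightarrow> Tgt C (st f) = Src C f"
  using st_hom[OF ar_hom] homD by blast+
lemma stst[simp]: "f \<in> Ar C \<Longrightarrow> st (st f) = f"
  using st_st ar_hom by metis
lemma stc[simp]: "f \<in> Ar C \<Longrightarrow> g \<in> Ar C \<Longrightarrow> Tgt C f = Src C g \<Longrightarrow> st (g \<cdot> f) = st f \<cdot> st g"
  using st_comp ar_hom by metis
lemma zst[simp]: "X \<in> Ob C \<Longrightarrow> Y \<in> Ob C \<Longrightarrow> st (z X Y) = z Y X"
  using zero_st by blast

definition pr :: "'o \<times> 'm \<times> 'm \<times> 'm \<times> 'm \<Rightarrow> 'm \<Rightarrow> 'm \<Rightarrow> 'm" where
  "pr b f g = (case b of (B, s1, r1, s2, r2) \<Rightarrow> THE u. u \<in> H (Src C f) B \<and> r1 \<cdot> u = f \<and> r2 \<cdot> u = g)"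
definition cp :: "'o \<times> 'm \<times> 'm \<times> 'm \<times> 'm \<Rightarrow> 'm \<Rightarrow> 'm \<Rightarrow> 'm" where
  "cp b f g = (case b of (B, s1, r1, s2, r2) \<Rightarrow> THE u. u \<in> H B (Tgt C f) \<and> u \<cdot> s1 = f \<and> u \<cdot> s2 = g)"

context
  fixes X1 X2 B s1 r1 s2 r2
  assumes bp: "is_biproduct C X1 X2 (B, s1, r1, s2, r2)"
begin

lemma bp_basic: "B \<in> Ob C" "s1 \<in> H X1 B" "s2 \<in> H X2 B" "r1 \<in> H B X1" "r2 \<in> H B X2"
  "r1 \<cdot> s1 = I X1" "r2 \<cdot> s2 = I X2" "r1 \<cdot> s2 = z X2 X1" "r2 \<cdot> s1 = z X1 X2"
  using bp unfolding is_biproduct_def by simp_all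

lemma bp_ar[simp]: "B \<in> Ob C" "s1 \<in> Ar C" "s2 \<in> Ar C" "r1 \<in> Ar C" "r2 \<in> Ar C"
  "Src C s1 = X1" "Src C s2 = X2" "Src C r1 = B" "Src C r2 = B"
  "Tgt C s1 = B" "Tgt C s2 = B" "Tgt C r1 = X1" "Tgt C r2 = X2" "X1 \<in> Ob C" "X2 \<in> Ob C"
  using bp_basic homD hom_ob by blast+

lemma bp_eqs[simp]: "r1 \<cdot> s1 = I X1" "r2 \<cdot> s2 = I X2" "r1 \<cdot> s2 = z X2 X1" "r2 \<cdot> s1 = z X1 X2"
  using bp_basic by simp_all

lemma pr_ex1: "f \<in> H W X1 \<Longrightarrow> g \<in> H W X2 \<Longrightarrow> \<exists>!u. u \<in> H W B \<and> r1 \<cdot> u = f \<and> r2 \<cdot> u = g"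
proof -
  assume f: "f \<in> H W X1" and g: "g \<in> H W X2"
  have W: "W \<in> Ob C" using hom_ob[OF f] by blast
  have "\<forall>W \<in> Ob C. \<forall>a1 \<in> H W X1. \<forall>a2 \<in> H W X2.
        \<exists>!u. u \<in> H W B \<and> r1 \<cdot> u = a1 \<and> r2 \<cdot> u = a2"
    using bp unfolding is_biproduct_def by simp
  then show ?thesis using W f g by blast
qed

lemma cp_ex1: "f \<in> H X1 W \<Longrightarrow> g \<in> H X2 W \<Longrightarrow> \<exists>!u. u \<in> H B W \<and> u \<cdot> s1 = f \<and> u \<cdot> s2 = g"
proof -
  assume f: "f \<in> H X1 W" and g: "g \<in> H X2 W"
  have W: "W \<in> Ob C" using hom_ob[OF f] by blast
  have "\<forall>W \<in> Ob C. \<forall>a1 \<in> H X1 W. \<forall>a2 \<in> H X2 W.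
        \<exists>!u. u \<in> H B W \<and> u \<cdot> s1 = a1 \<and> u \<cdot> s2 = a2"
    using bp unfolding is_biproduct_def by simp
  then show ?thesis using W f g by blast
qed

lemma pr_prop: assumes "f \<in> H W X1" "g \<in> H W X2"
  shows "pr (B, s1, r1, s2, r2) f g \<in> H W B \<and> r1 \<cdot> pr (B, s1, r1, s2, r2) f g = f \<and> r2 \<cdot> pr (B, s1, r1, s2, r2) f g = g"
proof -
  have "Src C f = W" using assms homD by blast
  then show ?thesis unfolding pr_def using theI'[OF pr_ex1[OF assms]] by simp
qed

lemma cp_prop: assumes "f \<in> H X1 W" "g \<in> H X2 W"
  shows "cp (B, s1, r1, s2, r2) f g \<in> H B W \<and> cp (B, s1, r1, s2, r2) f g \<cdot> s1 = f \<and> cp (B, s1, r1, s2, r2) f g \<cdot> s2 = g"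
proof -
  have "Tgt C f = W" using assms homD by blast
  then show ?thesis unfolding cp_def using theI'[OF cp_ex1[OF assms]] by simp
qed

lemma pr_uniq: "u \<in> H W B \<Longrightarrow> r1 \<cdot> u = f \<Longrightarrow> r2 \<cdot> u = g \<Longrightarrow> u = pr (B, s1, r1, s2, r2) f g"
proof -
  assume u: "u \<in> H W B" and 1: "r1 \<cdot> u = f" and 2: "r2 \<cdot> u = g"
  have f: "f \<in> H W X1" using 1 comp_hom[OF u bp_basic(4)] by simp
  have g: "g \<in> H W X2" using 2 comp_hom[OF u bp_basic(5)] by simp
  show ?thesis using ex1_eq[OF pr_ex1[OF f g]] pr_prop[OF f g] u 1 2 by blast
qed

lemma cp_uniq: "u \<in> H B W \<Longrightarrow> u \<cdot> s1 = f \<Longrightarrow> u \<cdot> s2 = g \<Longrightarrow> u = cp (B, s1, r1, s2, r2) f g"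
proof -
  assume u: "u \<in> H B W" and 1: "u \<cdot> s1 = f" and 2: "u \<cdot> s2 = g"
  have f: "f \<in> H X1 W" using 1 comp_hom[OF bp_basic(2) u] by simp
  have g: "g \<in> H X2 W" using 2 comp_hom[OF bp_basic(3) u] by simp
  show ?thesis using ex1_eq[OF cp_ex1[OF f g]] cp_prop[OF f g] u 1 2 by blast
qed

lemma jmono: "u \<in> H W B \<Longrightarrow> u' \<in> H W B \<Longrightarrow> r1 \<cdot> u = r1 \<cdot> u' \<Longrightarrow> r2 \<cdot> u = r2 \<cdot> u' \<Longrightarrow> u = u'"
  using pr_uniq by metis

lemma jepi: "u \<in> H B W \<Longrightarrow> u' \<in> H B W \<Longrightarrow> u \<cdot> s1 = u' \<cdot> s1 \<Longrightarrow> u \<cdot> s2 = u' \<cdot> s2 \<Longrightarrow> u = u'"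
  using cp_uniq by metis

lemma pr_comp: assumes f: "f \<in> H W X1" and g: "g \<in> H W X2" and k: "k \<in> H V W"
  shows "pr (B, s1, r1, s2, r2) f g \<cdot> k = pr (B, s1, r1, s2, r2) (f \<cdot> k) (g \<cdot> k)"
proof (rule pr_uniq)
  note p = pr_prop[OF f g]
  show "pr (B, s1, r1, s2, r2) f g \<cdot> k \<in> H V B" using p k by blast
  show "r1 \<cdot> (pr (B, s1, r1, s2, r2) f g \<cdot> k) = f \<cdot> k"
    using assoc[OF k _ bp_basic(4)] p by metis
  show "r2 \<cdot> (pr (B, s1, r1, s2, r2) f g \<cdot> k) = g \<cdot> k"
    using assoc[OF k _ bp_basic(5)] p by metis
qed

lemma cp_comp: assumes f: "f \<in> H X1 W" and g: "g \<in> H X2 W" and h: "h \<in> H W V"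
  shows "h \<cdot> cp (B, s1, r1, s2, r2) f g = cp (B, s1, r1, s2, r2) (h \<cdot> f) (h \<cdot> g)"
proof (rule cp_uniq)
  note p = cp_prop[OF f g]
  show "h \<cdot> cp (B, s1, r1, s2, r2) f g \<in> H B V" using p h by blast
  show "(h \<cdot> cp (B, s1, r1, s2, r2) f g) \<cdot> s1 = h \<cdot> f"
    using assoc[OF bp_basic(2) _ h] p by metis
  show "(h \<cdot> cp (B, s1, r1, s2, r2) f g) \<cdot> s2 = h \<cdot> g"
    using assoc[OF bp_basic(3) _ h] p by metis
qed

end


lemmas hD = homD[THEN conjunct1] homD[THEN conjunct2, THEN conjunct1] homD[THEN conjunct2, THEN conjunct2]

lemma G:
  assumes b: "is_biproduct C X1 X2 (B, s1, r1, s2, r2)" and c: "is_biproduct C W W (D, t1, q1, t2, q2)"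
  and a: "a \<in> H X1 V" and a': "a' \<in> H X2 V" and x: "x \<in> H W X1" and y: "y \<in> H W X2"
  shows "cp (B, s1, r1, s2, r2) a a' \<cdot> pr (B, s1, r1, s2, r2) x y
       = cp (D, t1, q1, t2, q2) (a \<cdot> x) (a' \<cdot> y) \<cdot> pr (D, t1, q1, t2, q2) (I W) (I W)"
proof -
  note bb[simp] = bp_ar[OF b] bp_eqs[OF b] and cc[simp] = bp_ar[OF c] bp_eqs[OF c]
  note ty[simp] = hD[OF a] hD[OF a'] hD[OF x] hD[OF y]
  have q1h: "q1 \<in> H D W" and q2h: "q2 \<in> H D W" using bp_basic[OF c] by auto
  have Wo: "W \<in> Ob C" using x hom_ob by blast
  have Dc: "pr (D, t1, q1, t2, q2) (I W) (I W) \<in> H W D" "q1 \<cdot> pr (D, t1, q1, t2, q2) (I W) (I W) = I W"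
     "q2 \<cdot> pr (D, t1, q1, t2, q2) (I W) (I W) = I W"
    using pr_prop[OF c id_hom[OF Wo] id_hom[OF Wo]] by auto
  note Dct[simp] = hD[OF Dc(1)]
  define Dm where "Dm = pr (B, s1, r1, s2, r2) (x \<cdot> q1) (y \<cdot> q2)"
  have Dm: "Dm \<in> H D B" "r1 \<cdot> Dm = x \<cdot> q1" "r2 \<cdot> Dm = y \<cdot> q2"
    using pr_prop[OF b comp_hom[OF q1h x] comp_hom[OF q2h y]] unfolding Dm_def by auto
  note Dmt[simp] = hD[OF Dm(1)]
  have Dt1: "Dm \<cdot> t1 = s1 \<cdot> x"
  proof (rule jmono[OF b])
    show "Dm \<cdot> t1 \<in> H W B" "s1 \<cdot> x \<in> H W B" by (simp_all add: hom_def)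
    have "r1 \<cdot> (Dm \<cdot> t1) = (r1 \<cdot> Dm) \<cdot> t1" by (simp add: as)
    also have "\<dots> = x" using Dm by (simp add: as)
    also have "\<dots> = r1 \<cdot> (s1 \<cdot> x)" by (simp add: as[symmetric])
    finally show "r1 \<cdot> (Dm \<cdot> t1) = r1 \<cdot> (s1 \<cdot> x)" .
    have "r2 \<cdot> (Dm \<cdot> t1) = (r2 \<cdot> Dm) \<cdot> t1" by (simp add: as)
    also have "\<dots> = z W X2" using Dm by (simp add: as)
    also have "\<dots> = r2 \<cdot> (s1 \<cdot> x)" by (simp add: as[symmetric])
    finally show "r2 \<cdot> (Dm \<cdot> t1) = r2 \<cdot> (s1 \<cdot> x)" .
  qed
  have Dt2: "Dm \<cdot> t2 = s2 \<cdot> y"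
  proof (rule jmono[OF b])
    show "Dm \<cdot> t2 \<in> H W B" "s2 \<cdot> y \<in> H W B" by (simp_all add: hom_def)
    have "r1 \<cdot> (Dm \<cdot> t2) = (r1 \<cdot> Dm) \<cdot> t2" by (simp add: as)
    also have "\<dots> = z W X1" using Dm by (simp add: as)
    also have "\<dots> = r1 \<cdot> (s2 \<cdot> y)" by (simp add: as[symmetric])
    finally show "r1 \<cdot> (Dm \<cdot> t2) = r1 \<cdot> (s2 \<cdot> y)" .
    have "r2 \<cdot> (Dm \<cdot> t2) = (r2 \<cdot> Dm) \<cdot> t2" by (simp add: as)
    also have "\<dots> = y" using Dm by (simp add: as)
    also have "\<dots> = r2 \<cdot> (s2 \<cdot> y)" by (simp add: as[symmetric])
    finally show "r2 \<cdot> (Dm \<cdot> t2) = r2 \<cdot> (s2 \<cdot> y)" .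
  qed
  have DD: "Dm \<cdot> pr (D, t1, q1, t2, q2) (I W) (I W) = pr (B, s1, r1, s2, r2) x y"
  proof (rule pr_uniq[OF b])
    show "Dm \<cdot> pr (D, t1, q1, t2, q2) (I W) (I W) \<in> H W B" by (simp add: hom_def)
    have "r1 \<cdot> (Dm \<cdot> pr (D, t1, q1, t2, q2) (I W) (I W)) = (r1 \<cdot> Dm) \<cdot> pr (D, t1, q1, t2, q2) (I W) (I W)" by (simp add: as)
    also have "\<dots> = x" using Dm Dc by (simp add: as)
    finally show "r1 \<cdot> (Dm \<cdot> pr (D, t1, q1, t2, q2) (I W) (I W)) = x" .
    have "r2 \<cdot> (Dm \<cdot> pr (D, t1, q1, t2, q2) (I W) (I W)) = (r2 \<cdot> Dm) \<cdot> pr (D, t1, q1, t2, q2) (I W) (I W)" by (simp add: as)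
    also have "\<dots> = y" using Dm Dc by (simp add: as)
    finally show "r2 \<cdot> (Dm \<cdot> pr (D, t1, q1, t2, q2) (I W) (I W)) = y" .
  qed
  have cpb: "cp (B, s1, r1, s2, r2) a a' \<in> H B V" "cp (B, s1, r1, s2, r2) a a' \<cdot> s1 = a" "cp (B, s1, r1, s2, r2) a a' \<cdot> s2 = a'"
    using cp_prop[OF b a a'] by auto
  note cpbt[simp] = hD[OF cpb(1)]
  have CD: "cp (B, s1, r1, s2, r2) a a' \<cdot> Dm = cp (D, t1, q1, t2, q2) (a \<cdot> x) (a' \<cdot> y)"
  proof (rule cp_uniq[OF c])
    show "cp (B, s1, r1, s2, r2) a a' \<cdot> Dm \<in> H D V" by (simp add: hom_def)
    have "(cp (B, s1, r1, s2, r2) a a' \<cdot> Dm) \<cdot> t1 = cp (B, s1, r1, s2, r2) a a' \<cdot> (s1 \<cdot> x)" using Dt1 by (simp add: as)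
    also have "\<dots> = a \<cdot> x" using cpb by (simp add: as[symmetric])
    finally show "(cp (B, s1, r1, s2, r2) a a' \<cdot> Dm) \<cdot> t1 = a \<cdot> x" .
    have "(cp (B, s1, r1, s2, r2) a a' \<cdot> Dm) \<cdot> t2 = cp (B, s1, r1, s2, r2) a a' \<cdot> (s2 \<cdot> y)" using Dt2 by (simp add: as)
    also have "\<dots> = a' \<cdot> y" using cpb by (simp add: as[symmetric])
    finally show "(cp (B, s1, r1, s2, r2) a a' \<cdot> Dm) \<cdot> t2 = a' \<cdot> y" .
  qed
  have "cp (B, s1, r1, s2, r2) a a' \<cdot> pr (B, s1, r1, s2, r2) x y = cp (B, s1, r1, s2, r2) a a' \<cdot> (Dm \<cdot> pr (D, t1, q1, t2, q2) (I W) (I W))"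
    using DD by simp
  also have "\<dots> = (cp (B, s1, r1, s2, r2) a a' \<cdot> Dm) \<cdot> pr (D, t1, q1, t2, q2) (I W) (I W)" by (simp add: as)
  finally show ?thesis using CD by simp
qed


lemma bp_ex: "X \<in> Ob C \<Longrightarrow> Y \<in> Ob C \<Longrightarrow> \<exists>b. is_biproduct C X Y b"
  using phc unfolding is_pre_hilbert_star_category_def is_orthonormal_biproduct_def by blast

lemma bp_some: "X \<in> Ob C \<Longrightarrow> Y \<in> Ob C \<Longrightarrow> is_biproduct C X Y (SOME b. is_biproduct C X Y b)"
  using bp_ex someI_ex by metis

lemma mplus_std:
  assumes f: "f \<in> H X Y" and g: "g \<in> H X Y"
  shows "mplus C f g = cp (SOME c. is_biproduct C Y Y c) (I Y) (I Y) \<cdot> pr (SOME c. is_biproduct C Y Y c) f g"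
proof -
  have X: "X \<in> Ob C" and Y: "Y \<in> Ob C" using f hom_ob by auto
  obtain B s1 r1 s2 r2 where b0: "(SOME b. is_biproduct C X X b) = (B, s1, r1, s2, r2)" by (rule prod_cases5)
  obtain D t1 q1 t2 q2 where c0: "(SOME b. is_biproduct C Y Y b) = (D, t1, q1, t2, q2)" by (rule prod_cases5)
  have b: "is_biproduct C X X (B, s1, r1, s2, r2)" using bp_some[OF X X] b0 by simp
  have c: "is_biproduct C Y Y (D, t1, q1, t2, q2)" using bp_some[OF Y Y] c0 by simp
  note bb[simp] = bp_ar[OF b] bp_eqs[OF b] and cc[simp] = bp_ar[OF c] bp_eqs[OF c]
  note ty[simp] = hD[OF f] hD[OF g]
  have sf: "Src C f = X" "Tgt C f = Y" by simp_all
  have dg: "diag C X (B, s1, r1, s2, r2) = pr (B, s1, r1, s2, r2) (I X) (I X)"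
    unfolding diag_def pr_def using X by simp
  have cd: "codiag C Y (D, t1, q1, t2, q2) = cp (D, t1, q1, t2, q2) (I Y) (I Y)"
    unfolding codiag_def cp_def using Y by simp
  have ds: "dsum C (B, s1, r1, s2, r2) (D, t1, q1, t2, q2) f g = pr (D, t1, q1, t2, q2) (f \<cdot> r1) (g \<cdot> r2)"
    unfolding dsum_def pr_def by simp
  have Db: "pr (B, s1, r1, s2, r2) (I X) (I X) \<in> H X B" "r1 \<cdot> pr (B, s1, r1, s2, r2) (I X) (I X) = I X"
     "r2 \<cdot> pr (B, s1, r1, s2, r2) (I X) (I X) = I X"
    using pr_prop[OF b id_hom[OF X] id_hom[OF X]] by auto
  note Dbt[simp] = hD[OF Db(1)]
  have "pr (D, t1, q1, t2, q2) (f \<cdot> r1) (g \<cdot> r2) \<cdot> pr (B, s1, r1, s2, r2) (I X) (I X)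
      = pr (D, t1, q1, t2, q2) ((f \<cdot> r1) \<cdot> pr (B, s1, r1, s2, r2) (I X) (I X)) ((g \<cdot> r2) \<cdot> pr (B, s1, r1, s2, r2) (I X) (I X))"
    by (rule pr_comp[OF c]) (simp_all add: hom_def)
  also have "\<dots> = pr (D, t1, q1, t2, q2) f g" using Db by (simp add: as)
  finally have e: "pr (D, t1, q1, t2, q2) (f \<cdot> r1) (g \<cdot> r2) \<cdot> pr (B, s1, r1, s2, r2) (I X) (I X) = pr (D, t1, q1, t2, q2) f g" .
  show ?thesis unfolding mplus_def Let_def sf b0 c0 dg cd ds e ..
qed

lemma mplus_src:
  assumes c: "is_biproduct C X X (B, s1, r1, s2, r2)" and f: "f \<in> H X Y" and g: "g \<in> H X Y"
  shows "mplus C f g = cp (B, s1, r1, s2, r2) f g \<cdot> pr (B, s1, r1, s2, r2) (I X) (I X)"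
proof -
  have X: "X \<in> Ob C" and Y: "Y \<in> Ob C" using f hom_ob by auto
  obtain D t1 q1 t2 q2 where c0: "(SOME b. is_biproduct C Y Y b) = (D, t1, q1, t2, q2)" by (rule prod_cases5)
  have d: "is_biproduct C Y Y (D, t1, q1, t2, q2)" using bp_some[OF Y Y] c0 by simp
  have "mplus C f g = cp (D, t1, q1, t2, q2) (I Y) (I Y) \<cdot> pr (D, t1, q1, t2, q2) f g"
    using mplus_std[OF f g] c0 by simp
  also have "\<dots> = cp (B, s1, r1, s2, r2) (I Y \<cdot> f) (I Y \<cdot> g) \<cdot> pr (B, s1, r1, s2, r2) (I X) (I X)"
    by (rule G[OF d c id_hom[OF Y] id_hom[OF Y] f g])
  finally show ?thesis using f g by simp
qed

lemma cp_pr_sum: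
  assumes b: "is_biproduct C X1 X2 (B, s1, r1, s2, r2)"
  and a: "a \<in> H X1 V" and a': "a' \<in> H X2 V" and x: "x \<in> H W X1" and y: "y \<in> H W X2"
  shows "cp (B, s1, r1, s2, r2) a a' \<cdot> pr (B, s1, r1, s2, r2) x y = mplus C (a \<cdot> x) (a' \<cdot> y)"
proof -
  have W: "W \<in> Ob C" using x hom_ob by auto
  obtain D t1 q1 t2 q2 where c0: "(SOME b. is_biproduct C W W b) = (D, t1, q1, t2, q2)" by (rule prod_cases5)
  have d: "is_biproduct C W W (D, t1, q1, t2, q2)" using bp_some[OF W W] c0 by simp
  show ?thesis using G[OF b d a a' x y] mplus_src[OF d comp_hom[OF x a] comp_hom[OF y a']] by simp
qed

lemma mplus_tgt:
  assumes c: "is_biproduct C Y Y (B, s1, r1, s2, r2)" and f: "f \<in> H X Y" and g: "g \<in> H X Y"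
  shows "mplus C f g = cp (B, s1, r1, s2, r2) (I Y) (I Y) \<cdot> pr (B, s1, r1, s2, r2) f g"
  using cp_pr_sum[OF c id_hom id_hom f g] f g hom_ob by auto

lemma plus_hom[intro]: assumes f: "f \<in> H X Y" and g: "g \<in> H X Y" shows "mplus C f g \<in> H X Y"
proof -
  have Y: "Y \<in> Ob C" using f hom_ob by auto
  obtain D t1 q1 t2 q2 where c0: "(SOME b. is_biproduct C Y Y b) = (D, t1, q1, t2, q2)" by (rule prod_cases5)
  have d: "is_biproduct C Y Y (D, t1, q1, t2, q2)" using bp_some[OF Y Y] c0 by simp
  show ?thesis using mplus_tgt[OF d f g] cp_prop[OF d id_hom[OF Y] id_hom[OF Y]] pr_prop[OF d f g] by auto
qed


abbreviation pl (infixl "\<boxplus>" 65) where "f \<boxplus> g \<equiv> mplus C f g"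

lemma bp_obtain: assumes "X \<in> Ob C" "Y \<in> Ob C"
  obtains B s1 r1 s2 r2 where "is_biproduct C X Y (B, s1, r1, s2, r2)"
proof -
  obtain B s1 r1 s2 r2 where c0: "(SOME b. is_biproduct C X Y b) = (B, s1, r1, s2, r2)" by (rule prod_cases5)
  show ?thesis using that bp_some[OF assms] c0 by simp
qed

lemma comp_left: assumes f: "f \<in> H X Y" and g: "g \<in> H X Y" and h: "h \<in> H Y V"
  shows "h \<cdot> (f \<boxplus> g) = h \<cdot> f \<boxplus> h \<cdot> g"
proof -
  have X: "X \<in> Ob C" using f hom_ob by auto
  obtain B s1 r1 s2 r2 where b: "is_biproduct C X X (B, s1, r1, s2, r2)" using bp_obtain[OF X X] by blast
  have c: "cp (B, s1, r1, s2, r2) f g \<in> H B Y" using cp_prop[OF b f g] by auto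
  have d: "pr (B, s1, r1, s2, r2) (I X) (I X) \<in> H X B" using pr_prop[OF b id_hom[OF X] id_hom[OF X]] by auto
  have "h \<cdot> (f \<boxplus> g) = (h \<cdot> cp (B, s1, r1, s2, r2) f g) \<cdot> pr (B, s1, r1, s2, r2) (I X) (I X)"
    using mplus_src[OF b f g] assoc[OF d c h] by simp
  also have "\<dots> = h \<cdot> f \<boxplus> h \<cdot> g"
    using cp_comp[OF b f g h] mplus_src[OF b comp_hom[OF f h] comp_hom[OF g h]] by simp
  finally show ?thesis .
qed

lemma comp_right: assumes f: "f \<in> H X Y" and g: "g \<in> H X Y" and k: "k \<in> H V X"
  shows "(f \<boxplus> g) \<cdot> k = f \<cdot> k \<boxplus> g \<cdot> k"
proof -
  have Y: "Y \<in> Ob C" using f hom_ob by auto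
  obtain B s1 r1 s2 r2 where b: "is_biproduct C Y Y (B, s1, r1, s2, r2)" using bp_obtain[OF Y Y] by blast
  have c: "cp (B, s1, r1, s2, r2) (I Y) (I Y) \<in> H B Y" using cp_prop[OF b id_hom[OF Y] id_hom[OF Y]] by auto
  have d: "pr (B, s1, r1, s2, r2) f g \<in> H X B" using pr_prop[OF b f g] by auto
  have "(f \<boxplus> g) \<cdot> k = cp (B, s1, r1, s2, r2) (I Y) (I Y) \<cdot> (pr (B, s1, r1, s2, r2) f g \<cdot> k)"
    using mplus_tgt[OF b f g] assoc[OF k d c] by simp
  also have "\<dots> = f \<cdot> k \<boxplus> g \<cdot> k"
    using pr_comp[OF b f g k] mplus_tgt[OF b comp_hom[OF k f] comp_hom[OF k g]] by simp
  finally show ?thesis .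
qed

lemma plus_zero: assumes f: "f \<in> H X Y" shows "f \<boxplus> z X Y = f"
proof -
  have X: "X \<in> Ob C" and Y: "Y \<in> Ob C" using f hom_ob by auto
  obtain B s1 r1 s2 r2 where b: "is_biproduct C X X (B, s1, r1, s2, r2)" using bp_obtain[OF X X] by blast
  note bb[simp] = bp_ar[OF b] bp_eqs[OF b] and ty[simp] = hD[OF f]
  have d: "pr (B, s1, r1, s2, r2) (I X) (I X) \<in> H X B" "r1 \<cdot> pr (B, s1, r1, s2, r2) (I X) (I X) = I X"
    using pr_prop[OF b id_hom[OF X] id_hom[OF X]] by auto
  note dt[simp] = hD[OF d(1)]
  have "f \<cdot> r1 = cp (B, s1, r1, s2, r2) f (z X Y)"
    by (rule cp_uniq[OF b]) (simp_all add: hom_def as Y)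
  then have "f \<boxplus> z X Y = (f \<cdot> r1) \<cdot> pr (B, s1, r1, s2, r2) (I X) (I X)"
    using mplus_src[OF b f zero_hom[OF X Y]] by simp
  also have "\<dots> = f" using d by (simp add: as)
  finally show ?thesis .
qed

lemma bp_swap: assumes b: "is_biproduct C X1 X2 (B, s1, r1, s2, r2)"
  shows "is_biproduct C X2 X1 (B, s2, r2, s1, r1)"
proof -
  have 1: "\<forall>W\<in>Ob C. \<forall>a1\<in>H X2 W. \<forall>a2\<in>H X1 W. \<exists>!u. u \<in> H B W \<and> u \<cdot> s2 = a1 \<and> u \<cdot> s1 = a2"
  proof (intro ballI)
    fix W a1 a2 assume a1: "a1 \<in> H X2 W" and a2: "a2 \<in> H X1 W"
    show "\<exists>!u. u \<in> H B W \<and> u \<cdot> s2 = a1 \<and> u \<cdot> s1 = a2"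
      using cp_prop[OF b a2 a1] cp_uniq[OF b] by (intro ex1I[of _ "cp (B, s1, r1, s2, r2) a2 a1"]) auto
  qed
  have 2: "\<forall>W\<in>Ob C. \<forall>a1\<in>H W X2. \<forall>a2\<in>H W X1. \<exists>!u. u \<in> H W B \<and> r2 \<cdot> u = a1 \<and> r1 \<cdot> u = a2"
  proof (intro ballI)
    fix W a1 a2 assume a1: "a1 \<in> H W X2" and a2: "a2 \<in> H W X1"
    show "\<exists>!u. u \<in> H W B \<and> r2 \<cdot> u = a1 \<and> r1 \<cdot> u = a2"
      using pr_prop[OF b a2 a1] pr_uniq[OF b] by (intro ex1I[of _ "pr (B, s1, r1, s2, r2) a2 a1"]) auto
  qed
  show ?thesis unfolding is_biproduct_def prod.case using 1 2 bp_basic[OF b] by blast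
qed

lemma plus_comm: assumes f: "f \<in> H X Y" and g: "g \<in> H X Y" shows "f \<boxplus> g = g \<boxplus> f"
proof -
  have X: "X \<in> Ob C" and Y: "Y \<in> Ob C" using f hom_ob by auto
  obtain B s1 r1 s2 r2 where b: "is_biproduct C X X (B, s1, r1, s2, r2)" using bp_obtain[OF X X] by blast
  note b' = bp_swap[OF b]
  have e1: "cp (B, s1, r1, s2, r2) f g = cp (B, s2, r2, s1, r1) g f"
    using cp_prop[OF b f g] cp_uniq[OF b'] by auto
  have e2: "pr (B, s1, r1, s2, r2) (I X) (I X) = pr (B, s2, r2, s1, r1) (I X) (I X)"
    using pr_prop[OF b id_hom[OF X] id_hom[OF X]] pr_uniq[OF b'] by auto
  show ?thesis using mplus_src[OF b f g] mplus_src[OF b' g f] e1 e2 by simp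
qed

lemma zero_plus: "f \<in> H X Y \<Longrightarrow> z X Y \<boxplus> f = f"
  using plus_comm plus_zero hom_ob zero_hom by metis

lemma plus_rot: assumes f: "f \<in> H X Y" and g: "g \<in> H X Y" and h: "h \<in> H X Y"
  shows "(f \<boxplus> g) \<boxplus> h = (f \<boxplus> h) \<boxplus> g"
proof -
  have X: "X \<in> Ob C" and Y: "Y \<in> Ob C" using f hom_ob by auto
  obtain B s1 r1 s2 r2 where b: "is_biproduct C X X (B, s1, r1, s2, r2)" using bp_obtain[OF X X] by blast
  let ?b = "(B, s1, r1, s2, r2)"
  have s1: "s1 \<in> H X B" and s2: "s2 \<in> H X B" using bp_basic[OF b] by auto
  have d: "pr ?b (I X) (I X) \<in> H X B" using pr_prop[OF b id_hom[OF X] id_hom[OF X]] by auto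
  note c1 = cp_prop[OF b f h] and c2 = cp_prop[OF b g zero_hom[OF X Y]]
  have e: "cp ?b (f \<boxplus> g) h = cp ?b f h \<boxplus> cp ?b g (z X Y)"
  proof (rule cp_uniq[OF b, symmetric])
    show "cp ?b f h \<boxplus> cp ?b g (z X Y) \<in> H B Y" using c1 c2 by blast
    show "(cp ?b f h \<boxplus> cp ?b g (z X Y)) \<cdot> s1 = f \<boxplus> g"
      using comp_right[OF _ _ s1, of "cp ?b f h" Y "cp ?b g (z X Y)"] c1 c2 by simp
    show "(cp ?b f h \<boxplus> cp ?b g (z X Y)) \<cdot> s2 = h"
      using comp_right[OF _ _ s2, of "cp ?b f h" Y "cp ?b g (z X Y)"] c1 c2 plus_zero[OF h] by simp
  qed
  have "(f \<boxplus> g) \<boxplus> h = (cp ?b f h \<boxplus> cp ?b g (z X Y)) \<cdot> pr ?b (I X) (I X)"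
    using mplus_src[OF b plus_hom[OF f g] h] e by simp
  also have "\<dots> = (f \<boxplus> h) \<boxplus> (g \<boxplus> z X Y)"
    using comp_right[OF _ _ d, of "cp ?b f h" Y "cp ?b g (z X Y)"] c1 c2
      mplus_src[OF b f h] mplus_src[OF b g zero_hom[OF X Y]] by simp
  finally show ?thesis using plus_zero[OF g] by simp
qed

lemma plus_assoc: assumes f: "f \<in> H X Y" and g: "g \<in> H X Y" and h: "h \<in> H X Y"
  shows "(f \<boxplus> g) \<boxplus> h = f \<boxplus> (g \<boxplus> h)"
proof -
  have "f \<boxplus> (g \<boxplus> h) = (g \<boxplus> h) \<boxplus> f" using plus_comm[OF f plus_hom[OF g h]] .
  also have "\<dots> = (g \<boxplus> f) \<boxplus> h" using plus_rot[OF g h f] .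
  also have "\<dots> = (f \<boxplus> g) \<boxplus> h" using plus_comm[OF g f] by simp
  finally show ?thesis by simp
qed

lemma ker_unpack:
  assumes k: "is_kernel C f e" and f: "f \<in> H A Q"
  shows "e \<in> H (Src C e) A" "f \<cdot> e = z (Src C e) Q"
    "\<And>h W. h \<in> H W A \<Longrightarrow> f \<cdot> h = z W Q \<Longrightarrow> \<exists>v. v \<in> H W (Src C e) \<and> e \<cdot> v = h"
proof -
  note ty[simp] = hD[OF f]
  have e: "e \<in> Ar C" "Tgt C e = A" "f \<cdot> e = z A Q \<cdot> e"
    and U: "\<forall>h \<in> Ar C. Tgt C h = A \<longrightarrow> f \<cdot> h = z A Q \<cdot> h \<longrightarrow>
        (\<exists>!u. u \<in> H (Src C h) (Src C e) \<and> e \<cdot> u = h)"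
    using k unfolding is_kernel_def is_equaliser_def by auto
  have Ao: "A \<in> Ob C" "Q \<in> Ob C" using f hom_ob by auto
  show "e \<in> H (Src C e) A" using e by (simp add: hom_def)
  show "f \<cdot> e = z (Src C e) Q" using e Ao by simp
  fix h W assume h: "h \<in> H W A" and fh: "f \<cdot> h = z W Q"
  note hy[simp] = hD[OF h]
  have fh': "f \<cdot> h = z A Q \<cdot> h" using fh Ao by simp
  have U': "Tgt C h = A \<longrightarrow> f \<cdot> h = z A Q \<cdot> h \<longrightarrow>
        (\<exists>!u. u \<in> H (Src C h) (Src C e) \<and> e \<cdot> u = h)" using U hy(1) by (rule bspec)
  have "\<exists>!u. u \<in> H (Src C h) (Src C e) \<and> e \<cdot> u = h" using U' fh' hy(3) by blast
  then have "\<exists>!u. u \<in> H W (Src C e) \<and> e \<cdot> u = h" using hy(2) by simp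
  then show "\<exists>v. v \<in> H W (Src C e) \<and> e \<cdot> v = h" by blast
qed

lemma neg_ex: assumes X: "X \<in> Ob C" shows "\<exists>n \<in> H X X. I X \<boxplus> n = z X X"
proof -
  obtain b where ob: "is_orthonormal_biproduct C X X b" and nm: "is_normal_mono C (diag C X b)"
    using phc X unfolding is_pre_hilbert_star_category_def by blast
  obtain B s1 r1 s2 r2 where bt: "b = (B, s1, r1, s2, r2)" by (rule prod_cases5)
  have b: "is_biproduct C X X (B, s1, r1, s2, r2)" and rs: "r1 = st s1" "r2 = st s2"
    using ob bt unfolding is_orthonormal_biproduct_def by auto
  let ?b = "(B, s1, r1, s2, r2)"
  note bb[simp] = bp_ar[OF b] bp_eqs[OF b]
  have sr: "s1 = st r1" "s2 = st r2" using rs by simp_all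
  define Dl where "Dl = pr ?b (I X) (I X)"
  have dg: "diag C X b = Dl" unfolding diag_def pr_def Dl_def bt using X by simp
  have Dl: "Dl \<in> H X B" "r1 \<cdot> Dl = I X" "r2 \<cdot> Dl = I X"
    using pr_prop[OF b id_hom[OF X] id_hom[OF X]] unfolding Dl_def by auto
  note Dlt[simp] = hD[OF Dl(1)]
  have sD: "st Dl \<in> H B X" using st_hom[OF Dl(1)] .
  have sDs1: "st Dl \<cdot> s1 = I X" using stc[of Dl r1] Dl X sr by simp
  have sDs2: "st Dl \<cdot> s2 = I X" using stc[of Dl r2] Dl X sr by simp
  have cpI: "cp ?b (I X) (I X) = st Dl" using cp_uniq[OF b sD sDs1 sDs2] by simp
  obtain m where km: "is_kernel C (st Dl) m" and im: "is_isometry C m"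
    using phc sD homD unfolding is_pre_hilbert_star_category_def by blast
  define M where "M = Src C m"
  note K = ker_unpack[OF km sD, folded M_def]
  have mh: "m \<in> H M B" using K(1) .
  note mt[simp] = hD[OF mh]
  have Mo: "M \<in> Ob C" using mh hom_ob by blast
  have smm: "st m \<cdot> m = I M" using im unfolding is_isometry_def M_def by simp
  define m1 where "m1 = r1 \<cdot> m"
  define m2 where "m2 = r2 \<cdot> m"
  have m1h: "m1 \<in> H M X" and m2h: "m2 \<in> H M X" unfolding m1_def m2_def by (simp_all add: hom_def)
  have sm1h: "st m1 \<in> H X M" and sm2h: "st m2 \<in> H X M" using m1h m2h by blast+
  note m12[simp] = hD[OF m1h] hD[OF m2h] hD[OF sm1h] hD[OF sm2h]
  have mpr: "m = pr ?b m1 m2" using pr_uniq[OF b mh] unfolding m1_def m2_def by simp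
  have a: "m1 \<boxplus> m2 = z M X" using mplus_tgt[OF b m1h m2h] cpI mpr K(2) by simp
  have smh: "st m \<in> H B M" using mh by blast
  have cps: "cp ?b (st m1) (st m2) = st m"
  proof (rule cp_uniq[OF b smh, symmetric])
    show "st m \<cdot> s1 = st m1" unfolding m1_def using stc[of m r1] sr by simp
    show "st m \<cdot> s2 = st m2" unfolding m2_def using stc[of m r2] sr by simp
  qed
  have bb2: "st m1 \<boxplus> st m2 = z X M"
  proof -
    have "st m1 \<boxplus> st m2 = st m \<cdot> Dl" using mplus_src[OF b sm1h sm2h] cps Dl_def by simp
    also have "\<dots> = st (st Dl \<cdot> m)" using stc[of m "st Dl"] by simp
    also have "\<dots> = z X M" using K(2) Mo X by simp
    finally show ?thesis .
  qed
  obtain q where q: "q \<in> Ar C" "Src C q = B" and kq: "is_kernel C q Dl"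
    using nm dg unfolding is_normal_mono_def by auto
  define Q where "Q = Tgt C q"
  have qh: "q \<in> H B Q" using q unfolding Q_def hom_def by simp
  note qt[simp] = hD[OF qh]
  have Qo: "Q \<in> Ob C" using qh hom_ob by blast
  note KQ = ker_unpack[OF kq qh]
  have SD: "Src C Dl = X" by simp
  note KQ' = KQ[unfolded SD]
  have sqh: "st q \<in> H Q B" using qh by blast
  have "st Dl \<cdot> st q = z Q X" using stc[of Dl q] KQ'(2) X Qo by simp
  then obtain u where u: "u \<in> H Q M" "m \<cdot> u = st q" using K(3)[OF sqh] by blast
  note ut[simp] = hD[OF u(1)]
  have qu: "q = st u \<cdot> st m" using stc[of u m] u(2) by simp
  have mono: "x = y" if x: "x \<in> H W X" and y: "y \<in> H W X" and xy: "st m1 \<cdot> x = st m1 \<cdot> y" for x y W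
  proof -
    note xyt[simp] = hD[OF x] hD[OF y]
    have Wo: "W \<in> Ob C" using x hom_ob by blast
    have p: "pr ?b x y \<in> H W B" "r1 \<cdot> pr ?b x y = x" "r2 \<cdot> pr ?b x y = y" using pr_prop[OF b x y] by auto
    note pt[simp] = hD[OF p(1)]
    have "st m \<cdot> pr ?b x y = st m1 \<cdot> x \<boxplus> st m2 \<cdot> y" using cp_pr_sum[OF b sm1h sm2h x y] cps by simp
    also have "\<dots> = st m1 \<cdot> y \<boxplus> st m2 \<cdot> y" using xy by simp
    also have "\<dots> = (st m1 \<boxplus> st m2) \<cdot> y" using comp_right[OF sm1h sm2h y] by simp
    also have "\<dots> = z W M" using bb2 Wo Mo by simp
    finally have e: "st m \<cdot> pr ?b x y = z W M" .
    have "q \<cdot> pr ?b x y = st u \<cdot> (st m \<cdot> pr ?b x y)" using qu by (simp add: as)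
    also have "\<dots> = z W Q" using e Wo by simp
    finally obtain v where v: "v \<in> H W X" "Dl \<cdot> v = pr ?b x y" using KQ'(3)[OF p(1)] by blast
    note vt[simp] = hD[OF v(1)]
    have "x = (r1 \<cdot> Dl) \<cdot> v" using p(2) v(2) by (simp add: as)
    moreover have "y = (r2 \<cdot> Dl) \<cdot> v" using p(3) v(2) by (simp add: as)
    ultimately show "x = y" using Dl by simp
  qed
  define A where "A = st m1 \<cdot> m1"
  define Bq where "Bq = st m1 \<cdot> m2"
  define Cq where "Cq = st m2 \<cdot> m2"
  have Ah: "A \<in> H M M" and Bh: "Bq \<in> H M M" and Ch: "Cq \<in> H M M"
    unfolding A_def Bq_def Cq_def by (simp_all add: hom_def)
  have P1: "A \<boxplus> Bq = z M M" unfolding A_def Bq_def using comp_left[OF m1h m2h sm1h] a Mo by simp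
  have P2: "Bq \<boxplus> Cq = z M M" unfolding Bq_def Cq_def using comp_right[OF sm1h sm2h m2h] bb2 Mo by simp
  have "A = A \<boxplus> (Bq \<boxplus> Cq)" using P2 plus_zero[OF Ah] by simp
  also have "\<dots> = (A \<boxplus> Bq) \<boxplus> Cq" using plus_assoc[OF Ah Bh Ch] by simp
  also have "\<dots> = Cq" using P1 zero_plus[OF Ch] by simp
  finally have AC: "A = Cq" .
  have AA: "A \<boxplus> A = I M"
  proof -
    have "I M = cp ?b (st m1) (st m2) \<cdot> pr ?b m1 m2" using smm cps mpr by simp
    also have "\<dots> = A \<boxplus> Cq" using cp_pr_sum[OF b sm1h sm2h m1h m2h] A_def Cq_def by simp
    finally show ?thesis using AC by simp
  qed
  define l where "l = m1 \<boxplus> m1"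
  have lh: "l \<in> H M X" unfolding l_def using m1h by blast
  note lt[simp] = hD[OF lh]
  have "st m1 \<cdot> (l \<cdot> st m1) = (st m1 \<cdot> l) \<cdot> st m1" by (simp add: as)
  also have "\<dots> = st m1" using comp_left[OF m1h m1h sm1h] AA A_def l_def by simp
  also have "\<dots> = st m1 \<cdot> I X" using X by simp
  finally have "l \<cdot> st m1 = I X" using mono[of "l \<cdot> st m1" X "I X"] X by (simp add: hom_def)
  define n where "n = l \<cdot> st m2"
  have nh: "n \<in> H X X" unfolding n_def by (simp add: hom_def)
  have "I X \<boxplus> n = l \<cdot> st m1 \<boxplus> l \<cdot> st m2" using \<open>l \<cdot> st m1 = I X\<close> n_def by simp
  also have "\<dots> = l \<cdot> (st m1 \<boxplus> st m2)" using comp_left[OF sm1h sm2h lh] by simp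
  also have "\<dots> = z X X" using bb2 X by simp
  finally show ?thesis using nh by blast
qed

lemma hom_group: assumes X: "X \<in> Ob C" and Y: "Y \<in> Ob C" shows "comm_group (hom_monoid C X Y)"
proof -
  have c: "carrier (hom_monoid C X Y) = H X Y" and m: "\<And>a b. a \<otimes>\<^bsub>hom_monoid C X Y\<^esub> b = a \<boxplus> b"
    and o: "\<one>\<^bsub>hom_monoid C X Y\<^esub> = z X Y" by (simp_all add: hom_monoid_def)
  have inv: "\<exists>y \<in> H X Y. y \<boxplus> x = z X Y" if x: "x \<in> H X Y" for x
  proof -
    obtain n where n: "n \<in> H X X" "I X \<boxplus> n = z X X" using neg_ex[OF X] by blast
    have "x \<cdot> n \<boxplus> x = x \<cdot> I X \<boxplus> x \<cdot> n" using plus_comm[OF comp_hom[OF n(1) x] x] x by simp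
    also have "\<dots> = x \<cdot> (I X \<boxplus> n)" using comp_left[OF id_hom[OF X] n(1) x] by simp
    also have "\<dots> = z X Y" using n(2) zero_r[OF x X] by simp
    finally show ?thesis using comp_hom[OF n(1) x] by blast
  qed
  show ?thesis
  proof (rule comm_groupI, unfold c m o)
    fix x y w assume x: "x \<in> H X Y" and y: "y \<in> H X Y" and w: "w \<in> H X Y"
    show "x \<boxplus> y \<in> H X Y" using plus_hom[OF x y] .
    show "x \<boxplus> y \<boxplus> w = x \<boxplus> (y \<boxplus> w)" using plus_assoc[OF x y w] .
    show "x \<boxplus> y = y \<boxplus> x" using plus_comm[OF x y] .
  next
    show "z X Y \<in> H X Y" using zero_hom[OF X Y] .
  next
    fix x assume x: "x \<in> H X Y"
    show "z X Y \<boxplus> x = x" using zero_plus[OF x] .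
    show "\<exists>y \<in> H X Y. y \<boxplus> x = z X Y" using inv[OF x] .
  qed
qed

end

theorem proposition3p2:
  fixes C :: "('o, 'm) starcat"
  assumes "is_pre_hilbert_star_category C"
  shows "is_additive C"
proof -
  interpret phc C by (rule phc.intro[OF assms])
  have 1: "has_finite_biproducts C" unfolding has_finite_biproducts_def
    using has_zero bp_ex by (intro conjI ballI) auto
  have 2: "\<forall>X \<in> Ob C. \<forall>Y \<in> Ob C. comm_group (hom_monoid C X Y)"
    by (intro ballI, rule hom_group)
  have 3: "\<forall>X \<in> Ob C. \<forall>Y \<in> Ob C. \<forall>W \<in> Ob C. \<forall>f \<in> Defs.hom C X Y. \<forall>g \<in> Defs.hom C X Y.
        (\<forall>h \<in> Defs.hom C Y W. Cmp C h (mplus C f g) = mplus C (Cmp C h f) (Cmp C h g))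
      \<and> (\<forall>k \<in> Defs.hom C W X. Cmp C (mplus C f g) k = mplus C (Cmp C f k) (Cmp C g k))"
  proof (intro ballI conjI)
    fix X Y W f g h k
    assume f: "f \<in> Defs.hom C X Y" and g: "g \<in> Defs.hom C X Y"
    show "h \<in> Defs.hom C Y W \<Longrightarrow> Cmp C h (mplus C f g) = mplus C (Cmp C h f) (Cmp C h g)"
      by (rule comp_left[OF f g])
    show "k \<in> Defs.hom C W X \<Longrightarrow> Cmp C (mplus C f g) k = mplus C (Cmp C f k) (Cmp C g k)"
      by (rule comp_right[OF f g])
  qed
  show ?thesis unfolding is_additive_def using 1 2 3 by (intro conjI)
qed

end
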